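(* Let $\lambda\in\mathbb R$ and $\gamma\in[0,\tfrac12]$, and for $\delta\in[\gamma/2,\tfrac12]$ define \[\vartheta^\star(\delta)=2\big(\lambda+H(\delta)-1\big)+(1-\gamma)\Big(1-H\Big(\frac{\delta-\gamma/2}{1-\gamma}\Big)\Big)\] (for $\gamma=1$ not applicable; here $1-\gamma\ge \tfrac12$). Then $\vartheta^\star$ attains its minimum over $[\gamma/2,\tfrac12]$ at $\delta_{\min}=\tfrac12\big(1-\sqrt{1-2\gamma}\big)$, and $\vartheta^\star(\delta_{\min})=2\lambda+H(\gamma)-1$.
   Context: All logarithms are base 2. $H(x)=-x\log x-(1-x)\log(1-x)$ for $x\in(0,1)$, $H(0)=H(1)=0$. *)

theory Defs
  imports Complex_Main
begin

definition H :: "real \<Rightarrow> real" where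
  "H x = (if x = 0 \<or> x = 1 then 0 else - x * log 2 x - (1 - x) * log 2 (1 - x))"

definition theta_star :: "real \<Rightarrow> real \<Rightarrow> real \<Rightarrow> real" where
  "theta_star lam \<gamma> \<delta> =
     2 * (lam + H \<delta> - 1) + (1 - \<gamma>) * (1 - H ((\<delta> - \<gamma> / 2) / (1 - \<gamma>)))"

end

theory Submission
  imports Defs
begin

definition E :: "real \<Rightarrow> real" where "E p = - p * log 2 p"

lemma E_mult: "a \<ge> 0 \<Longrightarrow> b \<ge> 0 \<Longrightarrow> E (a*b) = a * E b + b * E a"
  unfolding E_def
  by (cases "a = 0 \<or> b = 0") (auto simp: log_mult algebra_simps)

lemma H_E: "H x = E x + E (1 - x)"
  unfolding H_def E_def by (auto simp: algebra_simps)

lemma E_half: "E (1/2) = 1/2"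
  unfolding E_def by (simp add: log_divide)

lemma plog_mult: "a \<ge> 0 \<Longrightarrow> b \<ge> 0 \<Longrightarrow> (a*b = 0 \<longrightarrow> p = 0) \<Longrightarrow>
   p * log 2 (a*b) = p * log 2 a + p * log 2 b"
  by (cases "p = 0") (auto simp: log_mult algebra_simps)

lemma gibbs:
  assumes "p \<ge> 0" "q \<ge> 0" "q = 0 \<longrightarrow> p = 0"
  shows "E p \<le> - p * log 2 q + (q - p) / ln 2"
proof (cases "p = 0")
  case True thus ?thesis using assms by (simp add: E_def)
next
  case False
  hence p: "p > 0" using assms by auto
  hence q: "q > 0" using assms by auto
  have "ln (q/p) \<le> q/p - 1" using p q by (intro ln_le_minus_one) auto
  hence "p * ln (q/p) \<le> p * (q/p - 1)" using p by (intro mult_left_mono) auto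
  hence "p * ln q - p * ln p \<le> q - p" using p q by (simp add: ln_div algebra_simps)
  hence "(p * ln q - p * ln p) / ln 2 \<le> (q - p) / ln 2" by (intro divide_right_mono) auto
  thus ?thesis unfolding E_def log_def by (simp add: diff_divide_distrib)
qed

lemma joint:
  assumes g: "0 \<le> g" "g < 1" and d: "g/2 \<le> d" "d \<le> 1 - g/2"
  shows "H g + g + (1-g) * H ((d - g/2)/(1-g)) = 2 * E (g/2) + E (d - g/2) + E (1 - d - g/2)"
proof -
  define u where "u = (d - g/2)/(1-g)"
  have u: "0 \<le> u" "u \<le> 1" using g d by (auto simp: u_def field_simps)
  have 1: "d - g/2 = (1-g) * u" using g by (simp add: u_def)
  have 2: "1 - d - g/2 = (1-g) * (1-u)" using g by (simp add: u_def field_simps)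
  have 3: "g/2 = g * (1/2)" by simp
  have e1: "E (d - g/2) = (1-g) * E u + u * E (1-g)" unfolding 1 using g u by (simp add: E_mult)
  have e2: "E (1 - d - g/2) = (1-g) * E (1-u) + (1-u) * E (1-g)" unfolding 2 using g u by (simp add: E_mult)
  have e3: "E (g/2) = g/2 + E g / 2" using E_mult[of g "1/2"] E_half g by simp
  show ?thesis
    unfolding u_def[symmetric] e1 e2 e3 H_E by (simp add: algebra_simps)
qed

lemma subadd:
  assumes g: "0 \<le> g" "g \<le> 1/2" and d: "g/2 \<le> d" "d \<le> 1/2"
  shows "2 * E (g/2) + E (d - g/2) + E (1 - d - g/2) \<le> 2 * H d"
proof -
  have d0: "d \<ge> 0" using g d by auto
  have d1: "1 - d > 0" using d by auto
  have z: "d = 0 \<longrightarrow> g = 0" using g d by auto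
  have a: "E (d - g/2) \<le> - (d - g/2) * log 2 (d*d) + (d*d - (d - g/2)) / ln 2"
    using g d d0 z by (intro gibbs) auto
  have b: "E (g/2) \<le> - (g/2) * log 2 (d*(1-d)) + (d*(1-d) - g/2) / ln 2"
    using g d d0 d1 z by (intro gibbs) auto
  have c: "E (1 - d - g/2) \<le> - (1 - d - g/2) * log 2 ((1-d)*(1-d)) + ((1-d)*(1-d) - (1 - d - g/2)) / ln 2"
    using g d d1 by (intro gibbs) auto
  have a': "(d - g/2) * log 2 (d*d) = (d - g/2) * log 2 d + (d - g/2) * log 2 d"
    using plog_mult[of d d "d - g/2"] d0 z by auto
  have b': "(g/2) * log 2 (d*(1-d)) = (g/2) * log 2 d + (g/2) * log 2 (1-d)"
    using plog_mult[of d "1-d" "g/2"] d0 d1 z by auto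
  have c': "(1 - d - g/2) * log 2 ((1-d)*(1-d)) = (1 - d - g/2) * log 2 (1-d) + (1 - d - g/2) * log 2 (1-d)"
    using plog_mult[of "1-d" "1-d" "1 - d - g/2"] d1 by auto
  have s: "(d*d - (d - g/2)) / ln 2 + 2 * ((d*(1-d) - g/2) / ln 2) + ((1-d)*(1-d) - (1 - d - g/2)) / ln 2 = 0"
    by (simp add: divide_simps) (simp add: algebra_simps)
  have "2 * E (g/2) + E (d - g/2) + E (1 - d - g/2) \<le>
     - ((d - g/2) * log 2 (d*d)) - 2 * ((g/2) * log 2 (d*(1-d))) - ((1 - d - g/2) * log 2 ((1-d)*(1-d)))
     + ((d*d - (d - g/2)) / ln 2 + 2 * ((d*(1-d) - g/2) / ln 2) + ((1-d)*(1-d) - (1 - d - g/2)) / ln 2)"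
    using a b c by linarith
  also have "\<dots> = 2 * H d"
    unfolding s a' b' c' H_E E_def by (simp add: algebra_simps)
  finally show ?thesis .
qed

theorem mainTheorem4:
  fixes lam \<gamma> :: real
  assumes "0 \<le> \<gamma>" and "\<gamma> \<le> 1/2"
  defines "\<delta>min \<equiv> (1 - sqrt (1 - 2 * \<gamma>)) / 2"
  shows "\<delta>min \<in> {\<gamma>/2..1/2}
    \<and> (\<forall>\<delta>\<in>{\<gamma>/2..1/2}. theta_star lam \<gamma> \<delta>min \<le> theta_star lam \<gamma> \<delta>)
    \<and> theta_star lam \<gamma> \<delta>min = 2 * lam + H \<gamma> - 1"
proof -
  let ?g = \<gamma>
  define s where "s = sqrt (1 - 2 * \<gamma>)"
  have s0: "0 \<le> s" "s \<le> 1" using assms by (auto simp: s_def)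
  have ss: "s * s = 1 - 2 * \<gamma>" using assms by (simp add: s_def)
  have sle: "s \<le> 1 - \<gamma>"
  proof -
    have "s ^ 2 \<le> (1 - \<gamma>) ^ 2" unfolding power2_eq_square ss by (simp add: algebra_simps)
    moreover have "0 \<le> 1 - \<gamma>" using assms by simp
    ultimately show ?thesis by (rule power2_le_imp_le)
  qed
  have dm: "\<delta>min = (1 - s)/2" by (simp add: \<delta>min_def s_def)
  have rng: "\<delta>min \<in> {\<gamma>/2..1/2}" using dm sle s0 by auto
  have quad: "\<delta>min * \<delta>min = \<delta>min - \<gamma>/2" unfolding dm
  proof -
    have "(1 - s) / 2 * ((1 - s) / 2) = (1 - 2*s + s*s)/4" by (simp add: field_simps)
    also have "\<dots> = (1 - s) / 2 - \<gamma> / 2" unfolding ss by (simp add: field_simps)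
    finally show "(1 - s) / 2 * ((1 - s) / 2) = (1 - s) / 2 - \<gamma> / 2" .
  qed
  have th: "\<And>d. d \<in> {\<gamma>/2..1/2} \<Longrightarrow>
      theta_star lam \<gamma> d = 2*lam - 1 - \<gamma> + 2 * H d - (2 * E (\<gamma>/2) + E (d - \<gamma>/2) + E (1 - d - \<gamma>/2) - H \<gamma> - \<gamma>)"
  proof -
    fix d assume "d \<in> {\<gamma>/2..1/2}"
    hence "H \<gamma> + \<gamma> + (1-\<gamma>) * H ((d - \<gamma>/2)/(1-\<gamma>)) = 2 * E (\<gamma>/2) + E (d - \<gamma>/2) + E (1 - d - \<gamma>/2)"
      using assms by (intro joint) auto
    thus "theta_star lam \<gamma> d = 2*lam - 1 - \<gamma> + 2 * H d - (2 * E (\<gamma>/2) + E (d - \<gamma>/2) + E (1 - d - \<gamma>/2) - H \<gamma> - \<gamma>)"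
      unfolding theta_star_def by (simp add: algebra_simps)
  qed
  have eq: "2 * E (\<gamma>/2) + E (\<delta>min - \<gamma>/2) + E (1 - \<delta>min - \<gamma>/2) = 2 * H \<delta>min"
  proof -
    have p1: "\<gamma>/2 = \<delta>min * (1 - \<delta>min)" using quad by (simp add: algebra_simps)
    have p2: "\<delta>min - \<gamma>/2 = \<delta>min * \<delta>min" using quad by simp
    have p3: "1 - \<delta>min - \<gamma>/2 = (1-\<delta>min) * (1-\<delta>min)" using quad by (simp add: algebra_simps)
    have a: "0 \<le> \<delta>min" "0 \<le> 1 - \<delta>min" using rng assms(1) by auto
    have m1: "E (\<delta>min * (1 - \<delta>min)) = \<delta>min * E (1 - \<delta>min) + (1 - \<delta>min) * E \<delta>min"
      using a by (rule E_mult)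
    have m2: "E (\<delta>min * \<delta>min) = \<delta>min * E \<delta>min + \<delta>min * E \<delta>min"
      using a by (intro E_mult) auto
    have m3: "E ((1-\<delta>min) * (1-\<delta>min)) = (1-\<delta>min) * E (1-\<delta>min) + (1-\<delta>min) * E (1-\<delta>min)"
      using a by (intro E_mult) auto
    have "2 * E (\<gamma>/2) + E (\<delta>min - \<gamma>/2) + E (1 - \<delta>min - \<gamma>/2)
      = 2 * E (\<delta>min * (1 - \<delta>min)) + E (\<delta>min * \<delta>min) + E ((1-\<delta>min) * (1-\<delta>min))"
      by (simp only: p1[symmetric] p2[symmetric] p3[symmetric])
    also have "\<dots> = 2 * H \<delta>min" unfolding m1 m2 m3 H_E by (simp add: algebra_simps)
    finally show ?thesis .
  qed
  have val: "theta_star lam \<gamma> \<delta>min = 2 * lam + H \<gamma> - 1"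
    using th[OF rng] eq by simp
  have "\<forall>\<delta>\<in>{\<gamma>/2..1/2}. theta_star lam \<gamma> \<delta>min \<le> theta_star lam \<gamma> \<delta>"
  proof
    fix d assume d: "d \<in> {\<gamma>/2..1/2}"
    have "2 * E (\<gamma>/2) + E (d - \<gamma>/2) + E (1 - d - \<gamma>/2) \<le> 2 * H d"
      using d assms by (intro subadd) auto
    thus "theta_star lam \<gamma> \<delta>min \<le> theta_star lam \<gamma> d" using th[OF d] val by simp
  qed
  thus ?thesis using rng val by blast
qed

end
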